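(* Let $\Gamma$ be a gain operator on $\ell^\infty_+(\mathcal I)$ with $|\mathcal I|<\infty$. Then $\Gamma$ satisfies the NJI condition if and only if $\Gamma$ satisfies the uniform NJI condition.
   Context: Let $\mathcal I$ be a nonempty countable index set; $\ell^\infty_+(\mathcal I)$ is the cone of nonnegative real families $s=(s_i)_{i\in\mathcal I}$ with $\|s\|:=\sup_i|s_i|<\infty$; $s^1\le s^2$ means componentwise; $s>0$ means $s\ge0$, $s\ne0$; $\Gamma(s)\not\ge s$ means it is not the case that $\Gamma(s)\ge s$. $\mathcal K_\infty$: continuous strictly increasing unbounded $\gamma:\mathbb R_+\to\mathbb R_+$ with $\gamma(0)=0$. For $\mathcal J\subset\mathcal I$, $s_{|\mathcal J}$ agrees with $s$ on $\mathcal J$ and is $0$ elsewhere. Gain operator: for each $i$ a finite (possibly empty) $\mathcal I_i\subset\mathcal I\setminus\{i\}$; directed graph $\mathcal G$ with vertices $\mathcal I$ and edges $ji$, $j\in\mathcal I_i$; a pointwise equicontinuous family $\gamma_{ij}\in\mathcal K_\infty$ ($ji\in E(\mathcal G)$); functions $\mu_i:\ell^\infty_+(\mathcal I)\to[0,\infty]$ with (M1) some $\xi\in\mathcal K_\infty$ has $\mu_i(0)=0$, $\mu_i(s)\ge\xi(\|s\|)$ for all $i,s$; (M2) $\mu_i$ monotone; (M3) for each finite $\mathcal J$, $\mu_i$ restricted to vectors vanishing off $\mathcal J$ is finite-valued and continuous; (M4) for each norm-bounded $A$ and $\varepsilon>0$ there is $\delta>0$ with $\sup_i|\mu_i(s_{|\mathcal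 I_i})-\mu_i(s^0_{|\mathcal I_i})|\le\varepsilon$ whenever $s^0\in A$, $\|s-s^0\|\le\delta$. $\Gamma_i(s):=\mu_i([\gamma_{ij}(s_j)]_{j\in\mathcal I_i})$ (argument zero outside $\mathcal I_i$). $\mathcal N^-_i(n)$ is the set of vertices $j$ from which there is a directed path to $i$ of length at most $n$ ($\mathcal N^-_i(0)=\{i\}$). NJI condition: $\Gamma(s)\not\ge s$ for all $s>0$. Uniform NJI condition: for all $r,\varepsilon>0$ there are $n\in\mathbb N$ and $\delta>0$ such that for all $s\in\ell^\infty_+(\mathcal I)$ and $i\in\mathcal I$ with $s_i\ge\varepsilon$ and $\|s\|\le r$ there is $j\in\mathcal N^-_i(n)$ with $s_j\ge\delta$ and $\Gamma_j(s)<s_j$. *)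

theory Defs
  imports "HOL-Analysis.Analysis" "HOL-Library.Extended_Nonnegative_Real"
begin

text \<open>The finite index set is modelled by a finite type 'i (nonempty and countable automatically).
 Gain-operator values lie in [0,\<infinity>], modelled by ennreal.\<close>

definition Kinf :: "(real \<Rightarrow> real) \<Rightarrow> bool" where
  "Kinf g \<longleftrightarrow> continuous_on {0..} g \<and> strict_mono_on {0..} g \<and> g 0 = 0
     \<and> \<not> bdd_above (g ` {0..})"

definition cone :: "('i::finite \<Rightarrow> real) set" where
  "cone = {s. \<forall>i. 0 \<le> s i}"

definition supnorm :: "('i::finite \<Rightarrow> real) \<Rightarrow> real" where
  "supnorm s = (SUP i. \<bar>s i\<bar>)"

definition restr :: "'i set \<Rightarrow> ('i \<Rightarrow> real) \<Rightarrow> ('i \<Rightarrow> real)" where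
  "restr J s = (\<lambda>i. if i \<in> J then s i else 0)"

definition gain_op :: "('i \<Rightarrow> 'i set) \<Rightarrow> ('i \<Rightarrow> 'i \<Rightarrow> real \<Rightarrow> real)
     \<Rightarrow> ('i \<Rightarrow> ('i \<Rightarrow> real) \<Rightarrow> ennreal) \<Rightarrow> 'i \<Rightarrow> ('i \<Rightarrow> real) \<Rightarrow> ennreal" where
  "gain_op II gam mu i s = mu i (\<lambda>j. if j \<in> II i then gam i j (s j) else 0)"

text \<open>Gain operator hypotheses. gam i j is gamma_ij, used for the edge j -> i, j in II i.\<close>
definition is_gain_operator :: "('i::finite \<Rightarrow> 'i set) \<Rightarrow> ('i \<Rightarrow> 'i \<Rightarrow> real \<Rightarrow> real)
     \<Rightarrow> ('i \<Rightarrow> ('i \<Rightarrow> real) \<Rightarrow> ennreal) \<Rightarrow> bool" where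
  "is_gain_operator II gam mu \<longleftrightarrow>
     (\<forall>i. finite (II i) \<and> i \<notin> II i)
   \<and> (\<forall>i j. j \<in> II i \<longrightarrow> Kinf (gam i j))
   \<and> (\<forall>t\<ge>0. \<forall>e>0. \<exists>d>0. \<forall>i j r. j \<in> II i \<and> 0 \<le> r \<and> \<bar>r - t\<bar> < d
         \<longrightarrow> \<bar>gam i j r - gam i j t\<bar> < e)
   \<and> (\<exists>xi. Kinf xi \<and> (\<forall>i. mu i (\<lambda>_. 0) = 0 \<and>
         (\<forall>s\<in>cone. ennreal (xi (supnorm s)) \<le> mu i s)))
   \<and> (\<forall>i. \<forall>s1\<in>cone. \<forall>s2\<in>cone. s1 \<le> s2 \<longrightarrow> mu i s1 \<le> mu i s2)
   \<and> (\<forall>i J. finite J \<longrightarrow>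
         (\<forall>s\<in>cone. (\<forall>k. k \<notin> J \<longrightarrow> s k = 0) \<longrightarrow> mu i s < \<infinity>)
       \<and> continuous_on {s\<in>cone. \<forall>k. k \<notin> J \<longrightarrow> s k = 0} (mu i))
   \<and> (\<forall>A. A \<subseteq> cone \<and> (\<exists>B. \<forall>s\<in>A. supnorm s \<le> B) \<longrightarrow>
       (\<forall>e>0. \<exists>d>0. \<forall>s0\<in>A. \<forall>s\<in>cone. supnorm (\<lambda>k. s k - s0 k) \<le> d \<longrightarrow>
          (SUP i. \<bar>enn2real (mu i (restr (II i) s)) - enn2real (mu i (restr (II i) s0))\<bar>) \<le> e))"

text \<open>In-neighbourhood: vertices with a directed path of length at most n to i
 (edges j -> k for j in II k).\<close>
primrec in_nbhd :: "('i \<Rightarrow> 'i set) \<Rightarrow> 'i \<Rightarrow> nat \<Rightarrow> 'i set" where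
  "in_nbhd II i 0 = {i}"
| "in_nbhd II i (Suc n) = in_nbhd II i n \<union> {j. \<exists>k\<in>in_nbhd II i n. j \<in> II k}"

definition NJI :: "('i::finite \<Rightarrow> ('i \<Rightarrow> real) \<Rightarrow> ennreal) \<Rightarrow> bool" where
  "NJI G \<longleftrightarrow> (\<forall>s\<in>cone. s \<noteq> (\<lambda>_. 0) \<longrightarrow> \<not> (\<forall>i. ennreal (s i) \<le> G i s))"

definition uniform_NJI :: "('i::finite \<Rightarrow> 'i set) \<Rightarrow> ('i \<Rightarrow> ('i \<Rightarrow> real) \<Rightarrow> ennreal) \<Rightarrow> bool" where
  "uniform_NJI II G \<longleftrightarrow> (\<forall>r>0. \<forall>e>0. \<exists>n::nat. \<exists>d>0. \<forall>s\<in>cone. \<forall>i.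
      e \<le> s i \<and> supnorm s \<le> r \<longrightarrow>
      (\<exists>j\<in>in_nbhd II i n. d \<le> s j \<and> G j s < ennreal (s j)))"

end

theory Submission imports Defs begin

lemma supnorm_ge: "\<bar>s j\<bar> \<le> supnorm (s::'i::finite \<Rightarrow> real)"
  unfolding supnorm_def by (rule cSUP_upper) (auto intro: bdd_above_finite)

lemma compact_box: "compact {s::'i::finite \<Rightarrow> real. \<forall>j. s j \<in> {0..r}}"
proof -
  have "compactin (product_topology (\<lambda>i. euclidean) UNIV) (PiE UNIV (\<lambda>_::'i. {0..r::real}))"
    by (simp add: compactin_PiE)
  moreover have "PiE UNIV (\<lambda>_::'i. {0..r::real}) = {s. \<forall>j. s j \<in> {0..r}}" by auto
  ultimately show ?thesis by (simp add: euclidean_product_topology)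
qed

lemma nbhd_mono: "in_nbhd II i n \<subseteq> in_nbhd II i (Suc n)" by auto

lemma nbhd_stable:
  assumes h: "in_nbhd II i n = in_nbhd II i (Suc n)"
  shows "in_nbhd II i (n + k) = in_nbhd II i n"
proof (induction k)
  case 0
  show ?case by (simp only: add_0_right)
next
  case (Suc k)
  have "in_nbhd II i (n + Suc k) = in_nbhd II i (n + k) \<union> {j. \<exists>k'\<in>in_nbhd II i (n + k). j \<in> II k'}"
    by (simp only: add_Suc_right in_nbhd.simps)
  also have "\<dots> = in_nbhd II i n \<union> {j. \<exists>k'\<in>in_nbhd II i n. j \<in> II k'}"
    by (simp only: Suc.IH)
  also have "\<dots> = in_nbhd II i (Suc n)" by (simp only: in_nbhd.simps)
  also have "\<dots> = in_nbhd II i n" by (rule h[symmetric])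
  finally show ?case .
qed

lemma nbhd_card: "(\<forall>m<n. in_nbhd II i m \<noteq> in_nbhd II i (Suc m)) \<Longrightarrow> n + 1 \<le> card (in_nbhd II (i::'i::finite) n)"
proof (induction n)
  case 0
  show ?case by simp
next
  case (Suc n)
  have pre: "\<forall>m<n. in_nbhd II i m \<noteq> in_nbhd II i (Suc m)"
  proof (intro allI impI)
    fix m assume "m < n"
    then have "m < Suc n" by (rule less_SucI)
    then show "in_nbhd II i m \<noteq> in_nbhd II i (Suc m)" using Suc.prems by blast
  qed
  have a: "n + 1 \<le> card (in_nbhd II i n)" by (rule Suc.IH[OF pre])
  have ne: "in_nbhd II i n \<noteq> in_nbhd II i (Suc n)"
    using mp[OF spec[OF Suc.prems, of n] lessI] .
  have psub: "in_nbhd II i n \<subset> in_nbhd II i (Suc n)" by (rule psubsetI[OF nbhd_mono ne])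
  have b: "card (in_nbhd II i n) < card (in_nbhd II i (Suc n))"
    by (rule psubset_card_mono[OF finite_subset[OF subset_UNIV finite_class.finite_UNIV] psub])
  show ?case using a b by linarith
qed

lemma nbhd_closed:
  fixes II :: "'i::finite \<Rightarrow> 'i set"
  assumes "j \<in> in_nbhd II i CARD('i)" "k \<in> II j"
  shows "k \<in> in_nbhd II i CARD('i)"
proof -
  have "\<exists>m<CARD('i). in_nbhd II i m = in_nbhd II i (Suc m)"
  proof (rule ccontr)
    assume "\<not> ?thesis"
    then have "CARD('i) + 1 \<le> card (in_nbhd II i CARD('i))" using nbhd_card by blast
    moreover have "card (in_nbhd II i CARD('i)) \<le> CARD('i)" by (simp add: card_mono)
    ultimately show False by simp
  qed
  then obtain m where m: "m < CARD('i)" "in_nbhd II i m = in_nbhd II i (Suc m)" by blast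
  have "in_nbhd II i (m + (CARD('i) - m)) = in_nbhd II i m" by (rule nbhd_stable[OF m(2)])
  moreover have "in_nbhd II i (m + (Suc CARD('i) - m)) = in_nbhd II i m" by (rule nbhd_stable[OF m(2)])
  ultimately have "in_nbhd II i (Suc CARD('i)) = in_nbhd II i CARD('i)" using m(1) by simp
  moreover have "k \<in> in_nbhd II i (Suc CARD('i))" using assms by auto
  ultimately show ?thesis by simp
qed

lemma self_in_nbhd: "i \<in> in_nbhd II i n"
  by (induction n) auto

lemma gam_nonneg:
  assumes "Kinf g" "0 \<le> x" shows "0 \<le> g x"
proof (cases "x = 0")
  case True then show ?thesis using assms by (simp add: Kinf_def)
next
  case False
  have sm: "strict_mono_on {0..} g" using assms by (simp add: Kinf_def)
  have "g 0 < g x" using strict_mono_onD[OF sm, of 0 x] False assms(2) by simp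
  then show ?thesis using assms by (simp add: Kinf_def)
qed

lemma G_cont:
  fixes II :: "'i::finite \<Rightarrow> 'i set"
  assumes "is_gain_operator II gam mu"
  shows "continuous_on cone (gain_op II gam mu j)"
proof -
  define phi where "phi = (\<lambda>s::'i \<Rightarrow> real. \<lambda>k. if k \<in> II j then gam j k (s k) else 0)"
  have K0: "\<forall>i j. j \<in> II i \<longrightarrow> Kinf (gam i j)"
    using assms unfolding is_gain_operator_def by (elim conjE) assumption
  have K: "\<And>k. k \<in> II j \<Longrightarrow> Kinf (gam j k)" using K0 by simp
  have c1: "continuous_on cone phi"
    unfolding phi_def
  proof (rule continuous_on_coordinatewise_then_product)
    fix k
    show "continuous_on cone (\<lambda>x. if k \<in> II j then gam j k (x k) else 0)"
    proof (cases "k \<in> II j")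
      case True
      have c0: "continuous_on cone (\<lambda>x::'i\<Rightarrow>real. x k)"
        by (rule continuous_on_subset[OF continuous_on_product_coordinates]) auto
      have cg: "continuous_on {0..} (gam j k)" using K[OF True] by (simp add: Kinf_def)
      have "continuous_on cone (\<lambda>x. gam j k (x k))"
        by (rule continuous_on_compose2[OF cg c0]) (auto simp: cone_def)
      then show ?thesis using True by simp
    qed simp
  qed
  have c2: "phi ` cone \<subseteq> cone"
    using K gam_nonneg by (auto simp: phi_def cone_def)
  have M0: "\<forall>i J. finite J \<longrightarrow>
         (\<forall>s\<in>cone. (\<forall>k. k \<notin> J \<longrightarrow> s k = 0) \<longrightarrow> mu i s < \<infinity>)
       \<and> continuous_on {s\<in>cone. \<forall>k. k \<notin> J \<longrightarrow> s k = 0} (mu i)"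
    using assms unfolding is_gain_operator_def by (elim conjE) assumption
  have "continuous_on {s\<in>cone. \<forall>k. k \<notin> (UNIV::'i set) \<longrightarrow> s k = 0} (mu j)"
    using conjunct2[OF M0[rule_format, OF finite_class.finite_UNIV]] .
  then have c3: "continuous_on cone (mu j)" by simp
  have "continuous_on cone (mu j \<circ> phi)"
    by (rule continuous_on_compose[OF c1]) (rule continuous_on_subset[OF c3 c2])
  moreover have "gain_op II gam mu j = mu j \<circ> phi"
    by (auto simp: gain_op_def phi_def fun_eq_iff)
  ultimately show ?thesis by simp
qed

theorem proposition2p18:
  fixes II :: "'i::finite \<Rightarrow> 'i set"
    and gam :: "'i \<Rightarrow> 'i \<Rightarrow> real \<Rightarrow> real"
    and mu :: "'i \<Rightarrow> ('i \<Rightarrow> real) \<Rightarrow> ennreal"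
  assumes "is_gain_operator II gam mu"
  shows "NJI (gain_op II gam mu) \<longleftrightarrow> uniform_NJI II (gain_op II gam mu)"
proof
  let ?G = "gain_op II gam mu"
  assume nji: "NJI ?G"
  show "uniform_NJI II ?G"
    unfolding uniform_NJI_def
  proof (intro allI impI)
    fix r e :: real
    assume r: "r > 0" and e: "e > 0"
    let ?n = "CARD('i)"
    have per: "\<exists>d>0. \<forall>s\<in>cone. e \<le> s i \<and> supnorm s \<le> r \<longrightarrow>
      (\<exists>j\<in>in_nbhd II i ?n. d \<le> s j \<and> ?G j s < ennreal (s j))" for i
    proof (rule ccontr)
      let ?N = "in_nbhd II i ?n"
      assume neg0: "\<not> ?thesis"
      have neg: "\<exists>s. s \<in> cone \<and> e \<le> s i \<and> supnorm s \<le> r \<and>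
         (\<forall>j\<in>?N. dd \<le> s j \<longrightarrow> ennreal (s j) \<le> ?G j s)" if "dd > 0" for dd
        using spec[OF neg0[unfolded not_ex], of dd] that by (auto simp: not_less)
      have ex: "\<forall>k::nat. \<exists>s. s \<in> cone \<and> e \<le> s i \<and> supnorm s \<le> r \<and>
         (\<forall>j\<in>?N. 1 / real (Suc k) \<le> s j \<longrightarrow> ennreal (s j) \<le> ?G j s)"
        by (intro allI neg) simp
      obtain S where S0: "\<forall>k. S k \<in> cone \<and> e \<le> S k i \<and> supnorm (S k) \<le> r \<and>
         (\<forall>j\<in>?N. 1 / real (Suc k) \<le> S k j \<longrightarrow> ennreal (S k j) \<le> ?G j (S k))"
        using choice[OF ex] by (elim exE)
      have S: "\<And>k. S k \<in> cone" "\<And>k. e \<le> S k i" "\<And>k. supnorm (S k) \<le> r"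
        "\<And>k j. j \<in> ?N \<Longrightarrow> 1 / real (Suc k) \<le> S k j \<Longrightarrow> ennreal (S k j) \<le> ?G j (S k)"
        using S0 by auto
      have box: "S k \<in> {s. \<forall>j. s j \<in> {0..r}}" for k
      proof -
        have "S k j \<le> r" for j using supnorm_ge[of "S k" j] S(3)[of k] by linarith
        then show ?thesis using S(1)[of k] by (auto simp: cone_def)
      qed
      obtain l \<sigma> where l: "l \<in> {s. \<forall>j. s j \<in> {0..r}}" and sm: "strict_mono (\<sigma>::nat\<Rightarrow>nat)"
        and lim: "(S \<circ> \<sigma>) \<longlonglongrightarrow> l"
        by (rule seq_compactE[OF compact_imp_seq_compact[OF compact_box] allI[OF box]])
      have limj: "(\<lambda>k. S (\<sigma> k) j) \<longlonglongrightarrow> l j" for j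
        using continuous_on_tendsto_compose[OF continuous_on_product_coordinates lim, of j]
        by (simp add: o_def)
      have lcone: "l \<in> cone" using l by (auto simp: cone_def)
      have li: "e \<le> l i"
        using limj[of i] S(2) by (intro LIMSEQ_le_const) auto
      define l' where "l' = restr ?N l"
      have l'cone: "l' \<in> cone" using lcone by (auto simp: l'_def restr_def cone_def)
      have l'i: "l' i = l i" by (simp add: l'_def restr_def self_in_nbhd)
      have l'nz: "l' \<noteq> (\<lambda>_. 0)"
      proof
        assume "l' = (\<lambda>_. 0)"
        then have "l' i = 0" by simp
        then show False using l'i li e by simp
      qed
      have allge: "ennreal (l' j) \<le> ?G j l'" for j
      proof (cases "j \<in> ?N \<and> l j > 0")
        case False
        have "l j \<ge> 0" using lcone by (simp add: cone_def)
        then have "l' j = 0" using False by (auto simp: l'_def restr_def)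
        then show ?thesis by simp
      next
        case True
        then have jN: "j \<in> ?N" and lj: "l j > 0" by auto
        have eqv: "(\<lambda>k. if k \<in> II j then gam j k (l' k) else 0) = (\<lambda>k. if k \<in> II j then gam j k (l k) else 0)"
        proof (rule ext)
          fix k
          show "(if k \<in> II j then gam j k (l' k) else 0) = (if k \<in> II j then gam j k (l k) else 0)"
          proof (cases "k \<in> II j")
            case True
            then have "k \<in> ?N" by (rule nbhd_closed[OF jN])
            then have "l' k = l k" by (simp add: l'_def restr_def)
            then show ?thesis by simp
          qed simp
        qed
        have "?G j l' = ?G j l"
          unfolding gain_op_def using eqv by simp
        moreover have "ennreal (l j) \<le> ?G j l"
        proof (rule tendsto_le[OF sequentially_bot])
          show "(\<lambda>k. ?G j (S (\<sigma> k))) \<longlonglongrightarrow> ?G j l"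
            using continuous_on_tendsto_compose[OF G_cont[OF assms] lim[unfolded o_def] lcone] S(1)
            by simp
          show "(\<lambda>k. ennreal (S (\<sigma> k) j)) \<longlonglongrightarrow> ennreal (l j)"
            by (rule tendsto_ennrealI[OF limj])
          have ev1: "\<forall>\<^sub>F k in sequentially. l j / 2 < S (\<sigma> k) j"
            using order_tendstoD(1)[OF limj[of j], of "l j / 2"] lj by simp
          have inv0: "(\<lambda>k. inverse (real (Suc k))) \<longlonglongrightarrow> 0" by (rule LIMSEQ_inverse_real_of_nat)
          have ev2: "\<forall>\<^sub>F k in sequentially. inverse (real (Suc k)) < l j / 2"
            using order_tendstoD(2)[OF inv0, of "l j / 2"] lj by simp
          show "\<forall>\<^sub>F k in sequentially. ennreal (S (\<sigma> k) j) \<le> ?G j (S (\<sigma> k))"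
            using ev1 ev2
          proof eventually_elim
            case (elim k)
            have "k \<le> \<sigma> k" using sm by (rule seq_suble)
            then have "1 / real (Suc (\<sigma> k)) \<le> inverse (real (Suc k))"
              by (simp add: divide_simps)
            then have "1 / real (Suc (\<sigma> k)) \<le> S (\<sigma> k) j" using elim by linarith
            then show ?case using S(4)[OF jN] by blast
          qed
        qed
        moreover have "l' j = l j" using jN by (simp add: l'_def restr_def)
        ultimately show ?thesis by simp
      qed
      have "\<not> (\<forall>j. ennreal (l' j) \<le> ?G j l')"
        using bspec[OF nji[unfolded NJI_def] l'cone] l'nz by simp
      then show False using allge by simp
    qed
    have ex2: "\<forall>i. \<exists>dd. dd > 0 \<and> (\<forall>s\<in>cone. e \<le> s i \<and> supnorm s \<le> r \<longrightarrow>
      (\<exists>j\<in>in_nbhd II i ?n. dd \<le> s j \<and> ?G j s < ennreal (s j)))"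
    proof
      fix i
      from per[of i] obtain dd where "dd > 0" "\<forall>s\<in>cone. e \<le> s i \<and> supnorm s \<le> r \<longrightarrow>
        (\<exists>j\<in>in_nbhd II i ?n. dd \<le> s j \<and> ?G j s < ennreal (s j))" by (elim exE conjE)
      then show "\<exists>dd. dd > 0 \<and> (\<forall>s\<in>cone. e \<le> s i \<and> supnorm s \<le> r \<longrightarrow>
        (\<exists>j\<in>in_nbhd II i ?n. dd \<le> s j \<and> ?G j s < ennreal (s j)))" by (intro exI conjI)
    qed
    obtain D where D0: "\<forall>i. D i > 0 \<and> (\<forall>s\<in>cone. e \<le> s i \<and> supnorm s \<le> r \<longrightarrow>
      (\<exists>j\<in>in_nbhd II i ?n. D i \<le> s j \<and> ?G j s < ennreal (s j)))"
      using choice[OF ex2] by (elim exE)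
    have D1: "D i > 0" for i using conjunct1[OF spec[OF D0, of i]] .
    have D2: "\<forall>s\<in>cone. e \<le> s i \<and> supnorm s \<le> r \<longrightarrow>
      (\<exists>j\<in>in_nbhd II i ?n. D i \<le> s j \<and> ?G j s < ennreal (s j))" for i
      using conjunct2[OF spec[OF D0, of i]] .
    define d where "d = Min (range D)"
    have "d \<in> range D" unfolding d_def by (rule Min_in) simp_all
    then obtain i0 where "d = D i0" by blast
    then have d: "d > 0" using D1[of i0] by simp
    have dle: "d \<le> D i" for i unfolding d_def by (rule Min_le) simp_all
    show "\<exists>n. \<exists>d>0. \<forall>s\<in>cone. \<forall>i. e \<le> s i \<and> supnorm s \<le> r \<longrightarrow>
        (\<exists>j\<in>in_nbhd II i n. d \<le> s j \<and> ?G j s < ennreal (s j))"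
    proof (intro exI[of _ ?n] exI[of _ d] conjI d ballI allI impI)
      fix s :: "'i \<Rightarrow> real" and i :: 'i
      assume "s \<in> cone" "e \<le> s i \<and> supnorm s \<le> r"
      then obtain j where "j \<in> in_nbhd II i ?n" "D i \<le> s j" "?G j s < ennreal (s j)"
        using D2[of i] by blast
      moreover have "d \<le> s j" using dle[of i] \<open>D i \<le> s j\<close> by linarith
      ultimately show "\<exists>j\<in>in_nbhd II i ?n. d \<le> s j \<and> ?G j s < ennreal (s j)"
        by blast
    qed
  qed
next
  let ?G = "gain_op II gam mu"
  assume u: "uniform_NJI II ?G"
  show "NJI ?G" unfolding NJI_def
  proof (intro ballI impI notI)
    fix s :: "'i \<Rightarrow> real"
    assume s: "s \<in> cone" "s \<noteq> (\<lambda>_. 0)" and ge: "\<forall>i. ennreal (s i) \<le> ?G i s"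
    obtain i where "s i \<noteq> 0" using s(2) by auto
    then have si: "s i > 0" using s(1) by (auto simp: cone_def less_le)
    have "0 \<le> supnorm s" using supnorm_ge[of s i] by linarith
    then have r: "supnorm s + 1 > 0" by linarith
    obtain n d where "d > 0" and nd: "\<forall>s'\<in>cone. \<forall>i'. s i \<le> s' i' \<and> supnorm s' \<le> supnorm s + 1 \<longrightarrow>
      (\<exists>j\<in>in_nbhd II i' n. d \<le> s' j \<and> ?G j s' < ennreal (s' j))"
      using u[unfolded uniform_NJI_def, rule_format, OF r si] by (elim exE conjE)
    have "\<exists>j\<in>in_nbhd II i n. d \<le> s j \<and> ?G j s < ennreal (s j)"
      using spec[OF bspec[OF nd s(1)], of i] by simp
    then obtain j where "?G j s < ennreal (s j)" by blast
    then show False using ge by (simp add: not_le[symmetric])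
  qed
qed

end
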